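(* Let $\kappa$ be an uncountable regular cardinal and let $k\in\mathbb N$. Then every $k$-connected graph with at least $\kappa$ vertices contains a subdivision of the complete bipartite graph $K_{k,\kappa}$. *)

theory Defs
  imports Main
begin

definition sgraph :: "'a set \<Rightarrow> ('a \<Rightarrow> 'a \<Rightarrow> bool) \<Rightarrow> bool" where
  "sgraph V E \<longleftrightarrow> (\<forall>x y. E x y \<longrightarrow> x \<in> V \<and> y \<in> V \<and> x \<noteq> y \<and> E y x)"

definition connected_on :: "'a set \<Rightarrow> ('a \<Rightarrow> 'a \<Rightarrow> bool) \<Rightarrow> bool" where
  "connected_on W E \<longleftrightarrow> W \<noteq> {} \<and>
     (\<forall>x\<in>W. \<forall>y\<in>W. (\<lambda>a b. E a b \<and> a \<in> W \<and> b \<in> W)\<^sup>*\<^sup>* x y)"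

definition k_connected :: "'a set \<Rightarrow> ('a \<Rightarrow> 'a \<Rightarrow> bool) \<Rightarrow> nat \<Rightarrow> bool" where
  "k_connected V E k \<longleftrightarrow> (infinite V \<or> k < card V) \<and>
     (\<forall>X. X \<subseteq> V \<and> finite X \<and> card X < k \<longrightarrow> connected_on (V - X) E)"

definition is_path :: "'a set \<Rightarrow> ('a \<Rightarrow> 'a \<Rightarrow> bool) \<Rightarrow> 'a list \<Rightarrow> bool" where
  "is_path V E p \<longleftrightarrow> p \<noteq> [] \<and> distinct p \<and> set p \<subseteq> V \<and>
     (\<forall>i. Suc i < length p \<longrightarrow> E (p ! i) (p ! Suc i))"

definition inner :: "'a list \<Rightarrow> 'a set" where
  "inner p = set (butlast (tl p))"

definition contains_subdivision ::
  "'a set \<Rightarrow> ('a \<Rightarrow> 'a \<Rightarrow> bool) \<Rightarrow> 'b set \<Rightarrow> ('b \<Rightarrow> 'b \<Rightarrow> bool) \<Rightarrow> bool" where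
  "contains_subdivision V E VH EH \<longleftrightarrow>
    (\<exists>f P. inj_on f VH \<and> f ` VH \<subseteq> V \<and>
       (\<forall>u v. EH u v \<longrightarrow>
          is_path V E (P u v) \<and> hd (P u v) = f u \<and> last (P u v) = f v \<and>
          P v u = rev (P u v) \<and> inner (P u v) \<inter> f ` VH = {}) \<and>
       (\<forall>u v u' v'. EH u v \<and> EH u' v' \<and> {u, v} \<noteq> {u', v'} \<longrightarrow>
          inner (P u v) \<inter> inner (P u' v') = {}))"

text \<open>The complete bipartite graph K_{k,kappa}: vertex classes {..<k} and Field r,
  for a cardinal r.\<close>
definition KB_verts :: "nat \<Rightarrow> 'k rel \<Rightarrow> (nat + 'k) set" where
  "KB_verts k r = {..<k} <+> Field r"

definition KB_edges :: "nat \<Rightarrow> 'k rel \<Rightarrow> (nat + 'k) \<Rightarrow> (nat + 'k) \<Rightarrow> bool" where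
  "KB_edges k r x y \<longleftrightarrow>
     (\<exists>i j. i < k \<and> j \<in> Field r \<and> ((x = Inl i \<and> y = Inr j) \<or> (x = Inr j \<and> y = Inl i)))"

end

theory Submission
  imports Defs
begin


lemma succ_nth: "(\<forall>i. Suc i < length p \<longrightarrow> E (p ! i) (p ! Suc i)) \<longleftrightarrow> successively E p"
proof (induction p)
  case (Cons x xs)
  show ?case
  proof (cases xs)
    case (Cons y ys)
    have "(\<forall>i. Suc i < length (x # xs) \<longrightarrow> E ((x # xs) ! i) ((x # xs) ! Suc i))
      \<longleftrightarrow> E x y \<and> (\<forall>i. Suc i < length xs \<longrightarrow> E (xs ! i) (xs ! Suc i))"
      using Cons by (auto simp: nth_Cons split: nat.splits)
    with Cons.IH Cons show ?thesis by simp
  qed simp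
qed simp

lemma is_path_alt: "is_path V E p \<longleftrightarrow> p \<noteq> [] \<and> distinct p \<and> set p \<subseteq> V \<and> successively E p"
  unfolding is_path_def succ_nth by blast

lemma path_concat:
  assumes "is_path V E q" "is_path V E t" "last q = hd t" "set q \<inter> set t = {hd t}"
  shows "is_path V E (q @ tl t) \<and> hd (q @ tl t) = hd q \<and> last (q @ tl t) = last t \<and> set (q @ tl t) = set q \<union> set t"
proof -
  obtain a ts where t: "t = a # ts" using assms(2) unfolding is_path_alt by (cases t) auto
  have q: "q \<noteq> []" using assms(1) unfolding is_path_alt by auto
  have "a \<in> set q" using assms t by auto
  show ?thesis using assms q unfolding t is_path_alt
    by (auto simp: successively_append_iff successively_Cons last_append)
qed

lemma path_rev: "is_path V E p \<Longrightarrow> (\<And>x y. E x y \<Longrightarrow> E y x) \<Longrightarrow> is_path V E (rev p)"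
  unfolding is_path_alt by (auto elim: successively_mono)

lemma path_prefix: "is_path V E (xs @ ys) \<Longrightarrow> xs \<noteq> [] \<Longrightarrow> is_path V E xs"
  unfolding is_path_alt by (auto simp: successively_append_iff)

lemma path_suffix: "is_path V E (xs @ ys) \<Longrightarrow> ys \<noteq> [] \<Longrightarrow> is_path V E ys"
  unfolding is_path_alt by (auto simp: successively_append_iff)

lemma walk_path:
  assumes "(\<lambda>a b. E a b \<and> a \<in> W \<and> b \<in> W)\<^sup>*\<^sup>* x y" "x \<in> W"
  shows "\<exists>p. is_path W E p \<and> hd p = x \<and> last p = y"
  using assms
proof (induction rule: converse_rtranclp_induct)
  case base
  then show ?case by (intro exI[of _ "[y]"]) (auto simp: is_path_alt)
next
  case (step x z)
  then obtain p where p: "is_path W E p" "hd p = z" "last p = y" by auto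
  show ?case
  proof (cases "x \<in> set p")
    case True
    then obtain p1 p2 where "p = p1 @ x # p2" by (meson split_list)
    then show ?thesis using p path_suffix[of W E p1 "x # p2"]
      by (intro exI[of _ "x # p2"]) auto
  next
    case False
    then show ?thesis using p step
      by (intro exI[of _ "x # p"]) (cases p; auto simp: is_path_alt successively_Cons)
  qed
qed

lemma path_first:
  assumes "is_path V E p" "set p \<inter> B \<noteq> {}"
  shows "\<exists>q. is_path V E q \<and> hd q = hd p \<and> set q \<subseteq> set p \<and> last q \<in> B \<and> set q \<inter> B = {last q}"
proof -
  obtain ys z zs where s: "p = ys @ z # zs" "z \<in> B" "\<forall>w\<in>set ys. w \<notin> B"
    using split_list_first_prop[of p "\<lambda>w. w \<in> B"] assms(2) by blast
  have "is_path V E (ys @ [z])" using assms(1) s path_prefix[of V E "ys @ [z]" zs] by simp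
  then show ?thesis using s by (intro exI[of _ "ys @ [z]"]) (cases ys; auto)
qed



definition fan :: "'a set \<Rightarrow> ('a \<Rightarrow> 'a \<Rightarrow> bool) \<Rightarrow> 'a \<Rightarrow> 'a set \<Rightarrow> 'a list set \<Rightarrow> bool" where
  "fan V E x B Ps \<longleftrightarrow> finite Ps \<and>
     (\<forall>p\<in>Ps. is_path V E p \<and> hd p = x \<and> last p \<in> B \<and> set p \<inter> B = {last p}) \<and>
     (\<forall>p\<in>Ps. \<forall>q\<in>Ps. p \<noteq> q \<longrightarrow> set p \<inter> set q = {x})"

lemma fan_last_inj: "fan V E x B Ps \<Longrightarrow> x \<notin> B \<Longrightarrow> inj_on last Ps"
  unfolding fan_def inj_on_def is_path_alt
  by (metis IntI empty_iff insert_iff last_in_set)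

lemma fan_subset: "fan V E x B Ps \<Longrightarrow> Qs \<subseteq> Ps \<Longrightarrow> fan V E x B Qs"
  unfolding fan_def by (metis finite_subset subsetD)

lemma set_aux1: "Sq \<inter> B' = {a} \<Longrightarrow> B \<subseteq> B' \<Longrightarrow> a \<in> St \<Longrightarrow> St \<inter> B = {b} \<Longrightarrow> (Sq \<union> St) \<inter> B = {b}"
  by auto
lemma set_aux2: "Sq \<inter> B' = {a} \<Longrightarrow> St \<subseteq> B' \<Longrightarrow> a \<in> Sa \<Longrightarrow> Sa \<inter> St = {} \<Longrightarrow> Sq \<inter> St = {}"
  by auto
lemma set_aux3: "Sq \<inter> B' = {a} \<Longrightarrow> St \<subseteq> B' \<Longrightarrow> a \<notin> St \<Longrightarrow> Sq \<inter> St = {}"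
  by auto

lemma combine:
  assumes fan: "fan V E x B' Qs" and xB: "x \<notin> B'" and BB: "B \<subseteq> B'"
    and Q: "Qy \<in> Qs" "Q0 \<in> Qs" "Qy \<noteq> Q0"
    and T: "is_path V E Ty" "is_path V E Tz" "hd Ty = last Qy" "hd Tz = last Q0"
    "set Ty \<subseteq> B'" "set Tz \<subseteq> B'" "set Ty \<inter> set Tz = {}"
    "last Ty \<in> B" "last Tz \<in> B" "set Ty \<inter> B = {last Ty}" "set Tz \<inter> B = {last Tz}"
    and K: "K \<subseteq> Qs - {Qy, Q0}" "\<forall>Q\<in>K. last Q \<in> B \<and> last Q \<notin> set Ty \<union> set Tz"
  shows "fan V E x B (insert (Qy @ tl Ty) (insert (Q0 @ tl Tz) K))"
    "last (Qy @ tl Ty) = last Ty" "last (Q0 @ tl Tz) = last Tz"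
proof -
  have F: "\<And>p. p \<in> Qs \<Longrightarrow> is_path V E p \<and> hd p = x \<and> last p \<in> B' \<and> set p \<inter> B' = {last p}"
    and D: "\<And>p q. p \<in> Qs \<Longrightarrow> q \<in> Qs \<Longrightarrow> p \<noteq> q \<Longrightarrow> set p \<inter> set q = {x}"
    and fin: "finite Qs"
    using fan unfolding fan_def by blast+
  have hTy: "hd Ty \<in> set Ty" "hd Tz \<in> set Tz" using T(1,2) unfolding is_path_alt by auto
  have Fy: "is_path V E Qy" "hd Qy = x" "set Qy \<inter> B' = {last Qy}" using F[OF Q(1)] by blast+
  have Fz: "is_path V E Q0" "hd Q0 = x" "set Q0 \<inter> B' = {last Q0}" using F[OF Q(2)] by blast+
  have lQ: "\<And>p. p \<in> Qs \<Longrightarrow> last p \<in> set p" using F unfolding is_path_alt by (meson last_in_set)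
  have "set Qy \<inter> set Ty = {hd Ty}" using Fy T(3,5) hTy lQ[OF Q(1)] by auto
  from path_concat[OF Fy(1) T(1) T(3)[symmetric] this] Fy(2)
  have cy: "is_path V E (Qy @ tl Ty) \<and> hd (Qy @ tl Ty) = x \<and> last (Qy @ tl Ty) = last Ty \<and> set (Qy @ tl Ty) = set Qy \<union> set Ty"
    by simp
  have "set Q0 \<inter> set Tz = {hd Tz}" using Fz T(4,6) hTy lQ[OF Q(2)] by auto
  from path_concat[OF Fz(1) T(2) T(4)[symmetric] this] Fz(2)
  have cz: "is_path V E (Q0 @ tl Tz) \<and> hd (Q0 @ tl Tz) = x \<and> last (Q0 @ tl Tz) = last Tz \<and> set (Q0 @ tl Tz) = set Q0 \<union> set Tz"
    by simp
  show "last (Qy @ tl Ty) = last Ty" "last (Q0 @ tl Tz) = last Tz" using cy cz by auto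
  have xT: "x \<notin> set Ty" "x \<notin> set Tz" using T xB by auto
  have s1: "set (Qy @ tl Ty) \<inter> B = {last Ty}"
    using cy set_aux1[OF Fy(3) BB _ T(10)] T(3) hTy by auto
  have s2: "set (Q0 @ tl Tz) \<inter> B = {last Tz}"
    using cz set_aux1[OF Fz(3) BB _ T(11)] T(4) hTy by auto
  have s3: "\<And>Q. Q \<in> K \<Longrightarrow> set Q \<inter> B = {last Q}"
  proof -
    fix Q assume "Q \<in> K"
    then have "Q \<in> Qs" "last Q \<in> B" using K by auto
    then show "set Q \<inter> B = {last Q}" using F BB by blast
  qed
  have d12: "set (Qy @ tl Ty) \<inter> set (Q0 @ tl Tz) = {x}"
  proof -
    have "set Qy \<inter> set Q0 = {x}" using D Q by blast
    moreover have "set Qy \<inter> set Tz = {}" using set_aux2[OF Fy(3) T(6) _ T(7)] T(3) hTy by auto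
    moreover have "set Ty \<inter> set Q0 = {}" using set_aux2[OF Fz(3) T(5), of "set Tz"] T(4,7) hTy by (auto simp: Int_commute)
    ultimately show ?thesis using cy cz xT T(7) by auto
  qed
  have dK1: "\<And>Q. Q \<in> K \<Longrightarrow> set (Qy @ tl Ty) \<inter> set Q = {x}"
  proof -
    fix Q assume Q': "Q \<in> K"
    then have "Q \<in> Qs" "Q \<noteq> Qy" using K by auto
    moreover have "set Q \<inter> set Ty = {}"
      using set_aux3[OF conjunct2[OF conjunct2[OF conjunct2[OF F[OF \<open>Q \<in> Qs\<close>]]]] T(5)] K(2) Q' by auto
    ultimately show "set (Qy @ tl Ty) \<inter> set Q = {x}" using cy D[OF Q(1)] xT by auto
  qed
  have dK2: "\<And>Q. Q \<in> K \<Longrightarrow> set (Q0 @ tl Tz) \<inter> set Q = {x}"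
  proof -
    fix Q assume Q': "Q \<in> K"
    then have "Q \<in> Qs" "Q \<noteq> Q0" using K by auto
    moreover have "set Q \<inter> set Tz = {}"
      using set_aux3[OF conjunct2[OF conjunct2[OF conjunct2[OF F[OF \<open>Q \<in> Qs\<close>]]]] T(6)] K(2) Q' by auto
    ultimately show "set (Q0 @ tl Tz) \<inter> set Q = {x}" using cz D[OF Q(2)] xT by auto
  qed
  have dK: "\<And>p q. p \<in> K \<Longrightarrow> q \<in> K \<Longrightarrow> p \<noteq> q \<Longrightarrow> set p \<inter> set q = {x}" using D K by blast
  have finK: "finite K" using K fin finite_subset by blast
  show "fan V E x B (insert (Qy @ tl Ty) (insert (Q0 @ tl Tz) K))"
    unfolding fan_def
  proof (intro conjI)
    show "finite (insert (Qy @ tl Ty) (insert (Q0 @ tl Tz) K))" using finK by simp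
    show "\<forall>p\<in>insert (Qy @ tl Ty) (insert (Q0 @ tl Tz) K). is_path V E p \<and> hd p = x \<and> last p \<in> B \<and> set p \<inter> B = {last p}"
    proof
      fix p assume "p \<in> insert (Qy @ tl Ty) (insert (Q0 @ tl Tz) K)"
      then show "is_path V E p \<and> hd p = x \<and> last p \<in> B \<and> set p \<inter> B = {last p}"
      proof (elim insertE)
        assume "p \<in> K" then show ?thesis using s3 K F by blast
      qed (use cy cz s1 s2 T(8,9) in auto)
    qed
    show "\<forall>p\<in>insert (Qy @ tl Ty) (insert (Q0 @ tl Tz) K). \<forall>q\<in>insert (Qy @ tl Ty) (insert (Q0 @ tl Tz) K). p \<noteq> q \<longrightarrow> set p \<inter> set q = {x}"
    proof (intro ballI impI)
      fix p q assume p: "p \<in> insert (Qy @ tl Ty) (insert (Q0 @ tl Tz) K)"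
        and q: "q \<in> insert (Qy @ tl Ty) (insert (Q0 @ tl Tz) K)" and pq: "p \<noteq> q"
      have c: "\<And>A C. A \<inter> C = {x} \<Longrightarrow> C \<inter> A = {x}" by blast
      from p q pq show "set p \<inter> set q = {x}"
        apply (elim insertE)
        using d12 dK1 dK2 dK c by metis+
    qed
  qed
qed



lemma path_mono: "is_path W E p \<Longrightarrow> W \<subseteq> V \<Longrightarrow> is_path V E p"
  unfolding is_path_alt by auto

lemma fan_ends:
  assumes "fan V E x B Ps" "x \<notin> B" "finite X0" "w \<notin> last ` Ps" "insert w (last ` Ps) \<subseteq> last ` N" "finite N"
  shows "card Ps < card N"
proof -
  have "card Ps = card (last ` Ps)" using fan_last_inj[OF assms(1,2)] by (simp add: card_image)
  also have "\<dots> < card (insert w (last ` Ps))"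
    using assms(1,4) unfolding fan_def by simp
  also have "\<dots> \<le> card (last ` N)" using assms(5,6) by (simp add: card_mono)
  also have "\<dots> \<le> card N" using card_image_le[OF assms(6)] .
  finally show ?thesis .
qed

lemma set_aux4: "A \<subseteq> C \<Longrightarrow> C \<inter> B = {l} \<Longrightarrow> l \<notin> A \<Longrightarrow> A \<inter> B = {}"
  by auto

lemma augment:
  assumes kc: "\<And>X. X \<subseteq> V \<Longrightarrow> finite X \<Longrightarrow> card X < k \<Longrightarrow> connected_on (V - X) E"
    and xV: "x \<in> V"
  shows "x \<notin> B \<Longrightarrow> B \<subseteq> V \<Longrightarrow> (\<And>X. finite X \<Longrightarrow> card X < k \<Longrightarrow> \<not> B \<subseteq> X)
    \<Longrightarrow> fan V E x B Ps \<Longrightarrow> card Ps < k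
    \<Longrightarrow> \<exists>Qs. fan V E x B Qs \<and> card Ps < card Qs \<and> last ` Ps \<subseteq> last ` Qs"
proof (induction "card (\<Union>(set ` Ps) - B)" arbitrary: B Ps rule: less_induct)
  case less
  have xB: "x \<notin> B" and BV: "B \<subseteq> V" and Bbig: "\<And>X. finite X \<Longrightarrow> card X < k \<Longrightarrow> \<not> B \<subseteq> X"
    and fan: "fan V E x B Ps" and cP: "card Ps < k" using less.prems by blast+
  have F: "\<And>p. p \<in> Ps \<Longrightarrow> is_path V E p \<and> hd p = x \<and> last p \<in> B \<and> set p \<inter> B = {last p}"
    and D: "\<And>p q. p \<in> Ps \<Longrightarrow> q \<in> Ps \<Longrightarrow> p \<noteq> q \<Longrightarrow> set p \<inter> set q = {x}"
    and finP: "finite Ps"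
    using fan unfolding fan_def by blast+
  have lP: "\<And>p. p \<in> Ps \<Longrightarrow> last p \<in> set p \<and> x \<in> set p \<and> distinct p \<and> set p \<subseteq> V"
    using F unfolding is_path_alt by (metis hd_in_set last_in_set)
  have linjP: "inj_on last Ps" using fan_last_inj[OF fan xB] .
  define X where "X = last ` Ps"
  have finX: "finite X" using finP X_def by simp
  have cX: "card X < k" using card_image_le[OF finP, of last] cP unfolding X_def by linarith
  have XB: "X \<subseteq> B" using F X_def by auto
  obtain b where b: "b \<in> B" "b \<notin> X" using Bbig[OF finX cX] by blast
  have conn: "connected_on (V - X) E" using kc[OF _ finX cX] XB BV by blast
  have xVX: "x \<in> V - X" using xV xB XB by blast
  have bVX: "b \<in> V - X" using b BV by blast
  obtain R0 where R0: "is_path (V - X) E R0" "hd R0 = x" "last R0 = b"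
    using walk_path[of E "V - X" x b] conn xVX bVX unfolding connected_on_def by blast
  have "last R0 \<in> set R0" using R0(1) unfolding is_path_alt by simp
  then have "set R0 \<inter> B \<noteq> {}" using R0(3) b(1) by auto
  from path_first[OF R0(1) this] obtain R where
    R': "is_path (V - X) E R \<and> hd R = hd R0 \<and> set R \<subseteq> set R0 \<and> last R \<in> B \<and> set R \<inter> B = {last R}"
    by blast
  then have R: "is_path (V - X) E R" "hd R = x" "last R \<in> B" "set R \<inter> B = {last R}"
    using R0(2) by simp_all
  have RV: "is_path V E R" using path_mono[OF R(1)] by blast
  have RX: "set R \<inter> X = {}" and Rd: "distinct R" and Rne: "R \<noteq> []"
    using R(1) unfolding is_path_alt by auto
  have lRX: "last R \<notin> X" using RX Rne by (meson disjoint_iff last_in_set)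
  define S where "S = insert x (\<Union>(set ` Ps))"
  have xR: "x \<in> set R" using R(2) Rne hd_in_set by blast
  obtain R1 y R2 where Rs: "R = R1 @ y # R2" "y \<in> S" "\<forall>v\<in>set R2. v \<notin> S"
    using split_list_last_prop[of R "\<lambda>v. v \<in> S"] xR S_def by blast
  show ?case
  proof (cases "y = x")
    case True
    have "R1 = []"
    proof (rule ccontr)
      assume "R1 \<noteq> []"
      then have "hd R1 = x" "hd R1 \<in> set R1" using R(2) Rs(1) by auto
      then show False using Rd Rs(1) True by auto
    qed
    then have R': "R = x # R2" using Rs True by simp
    have RnP: "R \<notin> Ps" using lRX X_def by auto
    have dis: "\<And>p. p \<in> Ps \<Longrightarrow> set R \<inter> set p = {x}"
    proof -
      fix p assume p: "p \<in> Ps"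
      have "set R2 \<inter> set p = {}" using Rs(3) p S_def by auto
      then show "set R \<inter> set p = {x}" using R' lP[OF p] by auto
    qed
    have "fan V E x B (insert R Ps)"
      unfolding fan_def
    proof (intro conjI)
      show "finite (insert R Ps)" using finP by simp
      show "\<forall>p\<in>insert R Ps. is_path V E p \<and> hd p = x \<and> last p \<in> B \<and> set p \<inter> B = {last p}"
        using F RV R by auto
      show "\<forall>p\<in>insert R Ps. \<forall>q\<in>insert R Ps. p \<noteq> q \<longrightarrow> set p \<inter> set q = {x}"
        using D dis by (metis Int_commute insertE)
    qed
    moreover have "card Ps < card (insert R Ps)" using RnP finP by simp
    ultimately show ?thesis by blast
  next
    case False
    then obtain P where P: "P \<in> Ps" "y \<in> set P" using Rs(2) S_def by blast
    note FP = F[OF P(1)] and lPP = lP[OF P(1)]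
    have yR: "y \<in> set R" using Rs by simp
    have yB: "y \<notin> B"
    proof
      assume yB: "y \<in> B"
      then have "y = last R" using R(4) yR by blast
      moreover have "y = last P" using FP yB P(2) by blast
      ultimately show False using lRX P(1) unfolding X_def by (metis image_eqI)
    qed
    obtain P1 P2 where Ps: "P = P1 @ y # P2" using split_list[OF P(2)] by blast
    have P1ne: "P1 \<noteq> []" using Ps FP False by auto
    have hP1: "hd P1 = x" using Ps FP P1ne by simp
    have xP1: "x \<in> set P1" using hP1 P1ne hd_in_set by blast
    have dP: "distinct P" using lPP by blast
    have lastP: "last P = last (y # P2)" using Ps by simp
    have lP2: "last P \<in> set (y # P2)" using lastP by simp
    define Py where "Py = P1 @ [y]"
    define yP where "yP = y # P2"
    define yRR where "yRR = y # R2"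
    have Pypath: "is_path V E Py" using path_prefix[of V E "P1 @ [y]" P2] FP Ps Py_def by simp
    have yPpath: "is_path V E yP" using path_suffix[of V E P1 "y # P2"] FP Ps yP_def by simp
    have yRpath: "is_path V E yRR" using path_suffix[of V E R1 "y # R2"] RV Rs yRR_def by simp
    have R2S: "set R2 \<inter> S = {}" using Rs(3) by blast
    have PS: "set P \<subseteq> S" using P(1) S_def by blast
    have xyP: "x \<notin> set yP" using dP Ps xP1 yP_def by auto
    have xyR: "x \<notin> set yRR" using False R2S S_def yRR_def by auto
    define B' where "B' = B \<union> set yP \<union> set yRR"
    define Ps' where "Ps' = insert Py (Ps - {P})"
    have xB': "x \<notin> B'" using xB xyP xyR B'_def by blast
    have B'V: "B' \<subseteq> V" using BV yPpath yRpath B'_def unfolding is_path_alt by blast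
    have BB': "B \<subseteq> B'" using B'_def by blast
    have P1B: "set P1 \<inter> B = {}"
    proof -
      have "last P \<notin> set P1" using dP Ps lP2 by auto
      moreover have "set P1 \<subseteq> set P" using Ps by auto
      ultimately show ?thesis using set_aux4[of "set P1" "set P" B "last P"] FP by blast
    qed
    have P1yP: "set P1 \<inter> set yP = {}" using dP Ps yP_def by auto
    have P1yR: "set P1 \<inter> set yRR = {}"
    proof -
      have "y \<notin> set P1" using dP Ps by auto
      moreover have "set P1 \<subseteq> S" using PS Ps by auto
      ultimately show ?thesis using R2S yRR_def by auto
    qed
    have PyB': "set Py \<inter> B' = {y}" using P1B P1yP P1yR Py_def B'_def yP_def by auto
    have QB': "\<And>Q. Q \<in> Ps - {P} \<Longrightarrow> set Q \<inter> B' = {last Q}"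
    proof -
      fix Q assume Q: "Q \<in> Ps - {P}"
      have QP: "set Q \<inter> set P = {x}" using D Q P(1) by blast
      have "set yP \<subseteq> set P" using Ps yP_def by auto
      then have "set Q \<inter> set yP = {}" using QP xyP by auto
      moreover have "y \<notin> set Q" using QP P(2) False by auto
      moreover have "set Q \<subseteq> S" using Q S_def by blast
      ultimately have "set Q \<inter> (set yP \<union> set yRR) = {}" using R2S yRR_def by auto
      then show "set Q \<inter> B' = {last Q}" using F[of Q] Q B'_def by auto
    qed
    have PyP: "set Py \<subseteq> set P" using Ps Py_def by auto
    have xPy: "x \<in> set Py" using xP1 Py_def by simp
    have fan': "fan V E x B' Ps'"
      unfolding fan_def
    proof (intro conjI)
      show "finite Ps'" using finP Ps'_def by simp
      show "\<forall>p\<in>Ps'. is_path V E p \<and> hd p = x \<and> last p \<in> B' \<and> set p \<inter> B' = {last p}"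
      proof
        fix p assume "p \<in> Ps'"
        then consider "p = Py" | "p \<in> Ps - {P}" using Ps'_def by blast
        then show "is_path V E p \<and> hd p = x \<and> last p \<in> B' \<and> set p \<inter> B' = {last p}"
        proof cases
          case 1 then show ?thesis using Pypath hP1 P1ne PyB' Py_def B'_def yP_def by auto
        next
          case 2 then show ?thesis using F[of p] QB'[OF 2] BB' by auto
        qed
      qed
      show "\<forall>p\<in>Ps'. \<forall>q\<in>Ps'. p \<noteq> q \<longrightarrow> set p \<inter> set q = {x}"
      proof (intro ballI impI)
        fix p q assume p: "p \<in> Ps'" and q: "q \<in> Ps'" and pq: "p \<noteq> q"
        have A: "\<And>Q. Q \<in> Ps - {P} \<Longrightarrow> set Py \<inter> set Q = {x}"
        proof -
          fix Q assume Q: "Q \<in> Ps - {P}"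
          have "set P \<inter> set Q = {x}" using D Q P(1) by blast
          then show "set Py \<inter> set Q = {x}" using PyP xPy lP[of Q] Q by auto
        qed
        show "set p \<inter> set q = {x}"
          using p q pq A D unfolding Ps'_def by (metis Diff_iff Int_commute insertE)
      qed
    qed
    have PynP: "Py \<notin> Ps - {P}"
    proof
      assume "Py \<in> Ps - {P}"
      then have "set P \<inter> set Py = {x}" using D P(1) by blast
      moreover have "y \<in> set Py" using Py_def by simp
      ultimately show False using P(2) False by auto
    qed
    have cPs': "card Ps' = card Ps"
    proof -
      have "card Ps > 0" using P(1) finP card_gt_0_iff by blast
      then show ?thesis using PynP finP P(1) Ps'_def by simp
    qed
    have meas: "card (\<Union>(set ` Ps') - B') < card (\<Union>(set ` Ps) - B)"
    proof (rule psubset_card_mono)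
      show "finite (\<Union>(set ` Ps) - B)" using finP by auto
      have sub: "\<Union>(set ` Ps') \<subseteq> \<Union>(set ` Ps)" using PyP P(1) Ps'_def by auto
      have "y \<in> \<Union>(set ` Ps) - B" using P yB by auto
      moreover have "y \<notin> \<Union>(set ` Ps') - B'" using B'_def yP_def by auto
      ultimately show "\<Union>(set ` Ps') - B' \<subset> \<Union>(set ` Ps) - B" using sub BB' by blast
    qed
    have Bbig': "\<And>X. finite X \<Longrightarrow> card X < k \<Longrightarrow> \<not> B' \<subseteq> X" using Bbig BB' by blast
    obtain Qs where Qs: "fan V E x B' Qs" "card Ps' < card Qs" "last ` Ps' \<subseteq> last ` Qs"
      using less.hyps[OF meas xB' B'V Bbig' fan'] cPs' cP by auto
    have linj: "inj_on last Qs" using fan_last_inj[OF Qs(1) xB'] .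
    have FQ: "\<And>Q. Q \<in> Qs \<Longrightarrow> is_path V E Q \<and> hd Q = x \<and> last Q \<in> B' \<and> set Q \<inter> B' = {last Q}"
      and finQ: "finite Qs" using Qs(1) unfolding fan_def by blast+
    have lPs': "last ` Ps' = insert y (last ` (Ps - {P}))" using Ps'_def Py_def by simp
    have "\<not> last ` Qs \<subseteq> last ` Ps'"
    proof
      assume "last ` Qs \<subseteq> last ` Ps'"
      then have "card (last ` Qs) \<le> card (last ` Ps')" using finP Ps'_def by (simp add: card_mono)
      moreover have "card (last ` Ps') \<le> card Ps'" using finP Ps'_def card_image_le[of Ps' last] by simp
      moreover have "card (last ` Qs) = card Qs" using linj by (simp add: card_image)
      ultimately show False using Qs(2) by linarith
    qed
    then obtain Q0 where Q0: "Q0 \<in> Qs" "last Q0 \<notin> last ` Ps'" by blast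
    have "y \<in> last ` Qs" using Qs(3) lPs' by auto
    then obtain Qy where Qy: "Qy \<in> Qs" "last Qy = y" by blast
    have Qyz: "Qy \<noteq> Q0" using Qy Q0 lPs' by auto
    define z where "z = last Q0"
    have zB': "z \<in> B'" using FQ[OF Q0(1)] z_def by blast
    have zy: "z \<noteq> y" using Q0 lPs' z_def by auto
    have zPs: "z \<notin> last ` (Ps - {P})" using Q0 lPs' z_def by auto
    define K where "K = {Q \<in> Qs. last Q \<in> last ` (Ps - {P})}"
    have yPP: "set yP \<subseteq> set P" using Ps yP_def by auto
    have lyP: "last yP = last P" using lastP yP_def by simp
    have lyPin: "last P \<in> set yP" using lP2 yP_def by simp
    have yPB: "set yP \<inter> B = {last P}" using yPP lyPin FP by auto
    have yRRR: "set yRR \<subseteq> set R" using Rs yRR_def by auto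
    have lyR: "last yRR = last R" using Rs yRR_def by simp
    have lyRin: "last R \<in> set yRR" using lyR yRR_def by (metis last_in_set list.distinct(1))
    have yRB: "set yRR \<inter> B = {last R}" using yRRR lyRin R(4) by auto
    have yPR2: "set yP \<inter> set R2 = {}" using yPP PS R2S by auto
    have XPs: "X = insert (last P) (last ` (Ps - {P}))" using X_def P(1) by auto
    have K1: "K \<subseteq> Qs - {Qy, Q0}"
    proof
      fix Q assume Q: "Q \<in> K"
      then have "last Q \<in> B" using K_def F by auto
      then have "Q \<noteq> Qy" using Qy yB by auto
      moreover have "Q \<noteq> Q0" using Q K_def Q0 lPs' by auto
      ultimately show "Q \<in> Qs - {Qy, Q0}" using Q K_def by auto
    qed
    have K2: "\<And>Q. Q \<in> K \<Longrightarrow> last Q \<in> B \<and> last Q \<notin> set yP \<and> last Q \<notin> set yRR \<and> last Q \<noteq> z"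
    proof -
      fix Q assume Q: "Q \<in> K"
      then obtain Q' where Q': "Q' \<in> Ps - {P}" "last Q = last Q'" using K_def by auto
      have lQB: "last Q \<in> B" using Q' F by auto
      have "last Q \<notin> set yP"
      proof
        assume "last Q \<in> set yP"
        then have "last Q' = last P" using yPB lQB Q' by auto
        then show False using linjP Q' P(1) by (auto simp: inj_on_def)
      qed
      moreover have "last Q \<notin> set yRR"
      proof
        assume "last Q \<in> set yRR"
        then have "last Q = last R" using yRB lQB by auto
        then show False using lRX Q' unfolding X_def by (metis DiffD1 image_eqI)
      qed
      moreover have "last Q \<noteq> z" using zPs Q' by auto
      ultimately show "last Q \<in> B \<and> last Q \<notin> set yP \<and> last Q \<notin> set yRR \<and> last Q \<noteq> z"
        using lQB by blast
    qed
    have KPs: "last ` (Ps - {P}) \<subseteq> last ` K"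
    proof
      fix w assume w: "w \<in> last ` (Ps - {P})"
      then have "w \<in> last ` Qs" using Qs(3) lPs' by auto
      then obtain Q where "Q \<in> Qs" "last Q = w" by blast
      then show "w \<in> last ` K" using w K_def by auto
    qed
    have finish: "\<exists>Qs. fan V E x B Qs \<and> card Ps < card Qs \<and> last ` Ps \<subseteq> last ` Qs"
      if T: "is_path V E Ty" "is_path V E Tz" "hd Ty = y" "hd Tz = z"
        "set Ty \<subseteq> set yP \<union> set yRR" "set Tz \<subseteq> set yP \<union> set yRR \<union> {z}" "set Ty \<inter> set Tz = {}"
        "last Ty \<in> B" "last Tz \<in> B" "set Ty \<inter> B = {last Ty}" "set Tz \<inter> B = {last Tz}"
        "last P \<in> {last Ty, last Tz}" "last Ty \<notin> X \<or> last Tz \<notin> X"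
      for Ty Tz
    proof -
      have sTy: "set Ty \<subseteq> B'" using T(5) B'_def by auto
      have sTz: "set Tz \<subseteq> B'" using T(6) B'_def zB' by auto
      have K2': "\<forall>Q\<in>K. last Q \<in> B \<and> last Q \<notin> set Ty \<union> set Tz" using K2 T(5,6) by blast
      note cmb = combine[OF Qs(1) xB' BB' Qy(1) Q0(1) Qyz T(1,2) T(3)[folded Qy(2)] T(4)[unfolded z_def]
          sTy sTz T(7-11) K1 K2']
      define N where "N = insert (Qy @ tl Ty) (insert (Q0 @ tl Tz) K)"
      have fN: "fan V E x B N" using cmb(1) N_def by simp
      have lN: "last ` N = insert (last Ty) (insert (last Tz) (last ` K))" using cmb(2,3) N_def by simp
      have finN: "finite N" using fN unfolding fan_def by blast
      have XN: "X \<subseteq> last ` N" using XPs KPs lN T(12) by auto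
      obtain w where w: "w \<notin> X" "w \<in> last ` N" using T(13) lN by auto
      have "card Ps < card N"
        using fan_ends[OF fan xB finX, of w N] w XN finN X_def by auto
      then show ?thesis using fN XN X_def by blast
    qed
    have yP2: "y \<notin> set P2" using dP Ps by auto
    have dR: "distinct R" using Rd .
    consider (c1) "z \<in> set P2" | (c2) "z \<in> set R2" | (c3) "z \<notin> set P2" "z \<notin> set R2" by blast
    then show ?thesis
    proof cases
      case c1
      then obtain P21 P22 where P2s: "P2 = P21 @ z # P22" using split_list by metis
      have Tzp: "is_path V E (z # P22)"
        using path_suffix[of V E "P1 @ y # P21" "z # P22"] FP Ps P2s by simp
      have sTz: "set (z # P22) \<subseteq> set P2" using P2s by auto
      have lTz: "last (z # P22) = last P" using lastP P2s by simp
      have lTzin: "last P \<in> set (z # P22)" using lTz by (metis last_in_set list.distinct(1))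
      show ?thesis
      proof (rule finish[OF yRpath Tzp])
        show "hd yRR = y" "hd (z # P22) = z" using yRR_def by simp_all
        show "set yRR \<subseteq> set yP \<union> set yRR" by blast
        show "set (z # P22) \<subseteq> set yP \<union> set yRR \<union> {z}" using sTz yP_def by auto
        have "set P2 \<subseteq> S" using PS Ps by auto
        then show "set yRR \<inter> set (z # P22) = {}" using sTz yP2 R2S yRR_def by auto
        show "last yRR \<in> B" "last (z # P22) \<in> B" using lyR R(3) lTz FP by auto
        show "set yRR \<inter> B = {last yRR}" using yRB lyR by simp
        show "set (z # P22) \<inter> B = {last (z # P22)}" using sTz lTzin yPB lTz yP_def by auto
        show "last P \<in> {last yRR, last (z # P22)}" using lTz by simp
        show "last yRR \<notin> X \<or> last (z # P22) \<notin> X" using lyR lRX by simp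
      qed
    next
      case c2
      then obtain R21 R22 where R2s: "R2 = R21 @ z # R22" using split_list by metis
      have Tzp: "is_path V E (z # R22)"
        using path_suffix[of V E "R1 @ y # R21" "z # R22"] RV Rs R2s by simp
      have sTz: "set (z # R22) \<subseteq> set R2" using R2s by auto
      have lTz: "last (z # R22) = last R" using Rs R2s by simp
      have lTzin: "last R \<in> set (z # R22)" using lTz by (metis last_in_set list.distinct(1))
      show ?thesis
      proof (rule finish[OF yPpath Tzp])
        show "hd yP = y" "hd (z # R22) = z" using yP_def by simp_all
        show "set yP \<subseteq> set yP \<union> set yRR" by blast
        show "set (z # R22) \<subseteq> set yP \<union> set yRR \<union> {z}" using sTz yRR_def by auto
        show "set yP \<inter> set (z # R22) = {}" using sTz yPR2 by auto
        show "last yP \<in> B" "last (z # R22) \<in> B" using lyP lTz R(3) FP by auto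
        show "set yP \<inter> B = {last yP}" using yPB lyP by simp
        show "set (z # R22) \<inter> B = {last (z # R22)}" using sTz lTzin yRB lTz yRR_def by auto
        show "last P \<in> {last yP, last (z # R22)}" using lyP by simp
        show "last yP \<notin> X \<or> last (z # R22) \<notin> X" using lTz lRX by simp
      qed
    next
      case c3
      have zyP: "z \<notin> set yP" using c3 zy yP_def by simp
      have zyR: "z \<notin> set yRR" using c3 zy yRR_def by simp
      have zB: "z \<in> B" using zB' zyP zyR B'_def by blast
      have Tzp: "is_path V E [z]" using zB BV unfolding is_path_alt by auto
      have zX: "z \<notin> X" using XPs zPs zyP lyPin by auto
      show ?thesis
      proof (rule finish[OF yPpath Tzp])
        show "hd yP = y" "hd [z] = z" using yP_def by simp_all
        show "set yP \<subseteq> set yP \<union> set yRR" "set [z] \<subseteq> set yP \<union> set yRR \<union> {z}" by auto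
        show "set yP \<inter> set [z] = {}" using zyP by simp
        show "last yP \<in> B" "last [z] \<in> B" using lyP zB FP by auto
        show "set yP \<inter> B = {last yP}" using yPB lyP by simp
        show "set [z] \<inter> B = {last [z]}" using zB by simp
        show "last P \<in> {last yP, last [z]}" using lyP by simp
        show "last yP \<notin> X \<or> last [z] \<notin> X" using zX by simp
      qed
    qed
  qed
qed



lemma fan_k:
  assumes kc: "\<And>X. X \<subseteq> V \<Longrightarrow> finite X \<Longrightarrow> card X < k \<Longrightarrow> connected_on (V - X) E"
    and xV: "x \<in> V" and xB: "x \<notin> B" and BV: "B \<subseteq> V"
    and Bbig: "\<And>X. finite X \<Longrightarrow> card X < k \<Longrightarrow> \<not> B \<subseteq> X"
  shows "\<exists>Ps. fan V E x B Ps \<and> card Ps = k"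
proof -
  have "\<exists>Ps. fan V E x B Ps \<and> m \<le> card Ps" if "m \<le> k" for m
    using that
  proof (induction m)
    case 0
    have "fan V E x B {}" unfolding fan_def by simp
    then show ?case by blast
  next
    case (Suc m)
    then obtain Ps where Ps: "fan V E x B Ps" "m \<le> card Ps" by auto
    show ?case
    proof (cases "card Ps < k")
      case True
      then obtain Qs where "fan V E x B Qs" "card Ps < card Qs"
        using augment[OF kc xV xB BV Bbig Ps(1)] by blast
      then show ?thesis using Ps(2) by (intro exI[of _ Qs]) auto
    next
      case False
      then show ?thesis using Ps Suc.prems by (intro exI[of _ Ps]) auto
    qed
  qed
  then obtain Ps where Ps: "fan V E x B Ps" "k \<le> card Ps" by blast
  then have "finite Ps" unfolding fan_def by blast
  then obtain Qs where "Qs \<subseteq> Ps" "card Qs = k" using obtain_subset_with_card_n[OF Ps(2)] by metis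
  then show ?thesis using fan_subset[OF Ps(1)] by blast
qed

context includes cardinal_syntax
begin

lemma finite_less_r:
  assumes "(natLeq, r) \<in> ordLess" "finite W"
  shows "|W| <o r"
  using assms finite_iff_ordLess_natLeq ordLess_transitive by blast

lemma inf_r:
  assumes cr: "Card_order r" and nr: "(natLeq, r) \<in> ordLess"
  shows "\<not> finite (Field r)"
proof -
  have "natLeq \<le>o |Field r|"
    using ordLeq_ordIso_trans[OF ordLess_imp_ordLeq[OF nr] ordIso_symmetric[OF card_of_Field_ordIso[OF cr]]] .
  then show ?thesis using infinite_iff_natLeq_ordLeq by blast
qed

lemma union_less_r:
  assumes cr: "Card_order r" and reg: "regularCard r" and nr: "(natLeq, r) \<in> ordLess"
    and "|I| <o r" and "\<And>i. i \<in> I \<Longrightarrow> |F i| <o r"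
  shows "|\<Union>i\<in>I. F i| <o r"
proof -
  have inf: "\<not> finite (Field r)" using inf_r[OF cr nr] .
  have st: "stable r" using regularCard_stable[OF cr inf reg] .
  have "|SIGMA i:I. F i| <o r" using stable_elim[OF st] assms(4,5) by blast
  then show ?thesis using card_of_UNION_Sigma ordLeq_ordLess_trans by blast
qed

lemma nat_less_r: "(natLeq, r) \<in> ordLess \<Longrightarrow> |UNIV :: nat set| <o r"
  using card_of_nat ordIso_ordLess_trans by blast

lemma fpow_less_r:
  assumes cr: "Card_order r" and reg: "regularCard r" and nr: "(natLeq, r) \<in> ordLess"
    and U: "|U| <o r"
  shows "|{A. A \<subseteq> U \<and> finite A}| <o r"
proof -
  have inf: "\<not> finite (Field r)" using inf_r[OF cr nr] .
  have st: "stable r" using regularCard_stable[OF cr inf reg] .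
  define L where "L n = {xs. set xs \<subseteq> U \<and> length xs = n}" for n
  have Ln: "|L n| <o r" for n
  proof (induction n)
    case 0
    have "L 0 = {[]}" unfolding L_def by auto
    then show ?case using finite_less_r[OF nr, of "{[]}"] by simp
  next
    case (Suc n)
    have "L (Suc n) \<subseteq> (\<lambda>(a, xs). a # xs) ` (U \<times> L n)"
    proof
      fix ys assume "ys \<in> L (Suc n)"
      then obtain a xs where "ys = a # xs" "a \<in> U" "xs \<in> L n"
        unfolding L_def by (cases ys) auto
      then show "ys \<in> (\<lambda>(a, xs). a # xs) ` (U \<times> L n)" by force
    qed
    moreover have "|U \<times> L n| <o r" using stable_elim[OF st U, of "\<lambda>_. L n"] Suc by simp
    ultimately have "|L (Suc n)| \<le>o |U \<times> L n|"
      using ordLeq_transitive[OF card_of_mono1 card_of_image] by blast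
    then show ?case using ordLeq_ordLess_trans \<open>|U \<times> L n| <o r\<close> by blast
  qed
  have "|\<Union>n. L n| <o r" using union_less_r[OF cr reg nr nat_less_r[OF nr]] Ln by blast
  moreover have "{A. A \<subseteq> U \<and> finite A} \<subseteq> set ` (\<Union>n. L n)"
  proof
    fix A assume "A \<in> {A. A \<subseteq> U \<and> finite A}"
    then have "A \<subseteq> U" "finite A" by auto
    then obtain xs where "set xs = A" using finite_list by blast
    then show "A \<in> set ` (\<Union>n. L n)" using \<open>A \<subseteq> U\<close> unfolding L_def by blast
  qed
  ultimately have "|{A. A \<subseteq> U \<and> finite A}| \<le>o |\<Union>n. L n|"
    using ordLeq_transitive[OF card_of_mono1 card_of_image] by blast
  then show ?thesis using ordLeq_ordLess_trans \<open>|\<Union>n. L n| <o r\<close> by blast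
qed

lemma exists_outside:
  assumes "r \<le>o |V|" "|W| <o r"
  shows "\<exists>x\<in>V. x \<notin> W"
proof (rule ccontr)
  assume "\<not> ?thesis"
  then have "V \<subseteq> W" by blast
  then have "|V| \<le>o |W|" using card_of_mono1 by blast
  then have "r \<le>o |W|" using assms(1) ordLeq_transitive by blast
  then show False using assms(2) not_ordLess_ordLeq by blast
qed


lemma fin_chain:
  assumes "finite A" "A \<subseteq> (\<Union>n. U n)" "\<And>m n. m \<le> n \<Longrightarrow> U m \<subseteq> U (n::nat)"
  shows "\<exists>n. A \<subseteq> U n"
  using assms(1,2)
proof (induction A rule: finite_induct)
  case empty then show ?case by blast
next
  case (insert a F)
  then obtain n where n: "F \<subseteq> U n" by blast
  obtain m where m: "a \<in> U m" using insert.prems by blast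
  have "insert a F \<subseteq> U (max m n)" using n m assms(3)[of m "max m n"] assms(3)[of n "max m n"] by auto
  then show ?case by blast
qed

definition fanA :: "'a set \<Rightarrow> ('a \<Rightarrow> 'a \<Rightarrow> bool) \<Rightarrow> 'a set \<Rightarrow> 'a \<Rightarrow> ('a \<Rightarrow> 'a list) \<Rightarrow> bool" where
  "fanA V E A x p \<longleftrightarrow> x \<in> V \<and> x \<notin> A \<and>
    (\<forall>a\<in>A. is_path V E (p a) \<and> hd (p a) = x \<and> last (p a) = a \<and> set (p a) \<inter> A = {a}) \<and>
    (\<forall>a\<in>A. \<forall>b\<in>A. a \<noteq> b \<longrightarrow> set (p a) \<inter> set (p b) = {x})"

definition good :: "'k rel \<Rightarrow> 'a set \<Rightarrow> ('a \<Rightarrow> 'a \<Rightarrow> bool) \<Rightarrow> 'a set \<Rightarrow> bool" where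
  "good r V E A \<longleftrightarrow> (\<forall>W. W \<subseteq> V \<and> |W| <o r \<longrightarrow>
     (\<exists>x p. fanA V E A x p \<and> x \<notin> W \<and> (\<forall>a\<in>A. set (p a) \<inter> W \<subseteq> {a})))"

lemma exists_good:
  assumes cr: "Card_order r" and reg: "regularCard r" and nr: "(natLeq, r) \<in> ordLess"
    and rV: "r \<le>o |V|"
    and kc: "\<And>X. X \<subseteq> V \<Longrightarrow> finite X \<Longrightarrow> card X < k \<Longrightarrow> connected_on (V - X) E"
  shows "\<exists>A. A \<subseteq> V \<and> finite A \<and> card A = k \<and> good r V E A"
proof -
  have infV: "infinite V"
    using ordLeq_transitive[OF ordLess_imp_ordLeq[OF nr] rV] infinite_iff_natLeq_ordLeq by blast
  obtain U0 where U0: "U0 \<subseteq> V" "finite U0" "card U0 = k"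
    using infinite_arbitrarily_large[OF infV] by blast
  define blk where "blk A W \<longleftrightarrow> W \<subseteq> V \<and> |W| <o r \<and>
     \<not> (\<exists>x p. fanA V E A x p \<and> x \<notin> W \<and> (\<forall>a\<in>A. set (p a) \<inter> W \<subseteq> {a}))" for A W
  define Wf where "Wf A = (if good r V E A then {} else (SOME W. blk A W))" for A
  have Wf: "Wf A \<subseteq> V \<and> |Wf A| <o r" for A
  proof (cases "good r V E A")
    case True
    then show ?thesis using Wf_def finite_less_r[OF nr, of "{}"] by simp
  next
    case False
    then have "\<exists>W. blk A W" unfolding good_def blk_def by blast
    then have "blk A (Wf A)" using False Wf_def someI_ex by metis
    then show ?thesis unfolding blk_def by blast
  qed
  have Wf2: "\<not> (\<exists>x p. fanA V E A x p \<and> x \<notin> Wf A \<and> (\<forall>a\<in>A. set (p a) \<inter> Wf A \<subseteq> {a}))"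
    if "\<not> good r V E A" for A
  proof -
    have "\<exists>W. blk A W" using that unfolding good_def blk_def by blast
    then have "blk A (Wf A)" using that Wf_def someI_ex by metis
    then show ?thesis unfolding blk_def by blast
  qed
  define U where "U n = rec_nat U0 (\<lambda>_ Y. Y \<union> (\<Union>A\<in>{A. A \<subseteq> Y \<and> finite A}. Wf A)) n" for n
  have U0': "U 0 = U0" unfolding U_def by simp
  have USuc: "U (Suc n) = U n \<union> (\<Union>A\<in>{A. A \<subseteq> U n \<and> finite A}. Wf A)" for n
    unfolding U_def by simp
  have WfV: "\<And>A. Wf A \<subseteq> V" using Wf by blast
  have UV: "U n \<subseteq> V" for n
  proof (induction n)
    case 0 then show ?case using U0' U0 by simp
  next
    case (Suc n) then show ?case unfolding USuc using WfV by blast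
  qed
  have inf: "\<not> finite (Field r)" using inf_r[OF cr nr] .
  have Ucard: "|U n| <o r" for n
  proof (induction n)
    case 0
    then show ?case using U0' U0 finite_less_r[OF nr] by simp
  next
    case (Suc n)
    have "|\<Union>A\<in>{A. A \<subseteq> U n \<and> finite A}. Wf A| <o r"
      using union_less_r[OF cr reg nr fpow_less_r[OF cr reg nr Suc]] Wf by blast
    then show ?case using USuc card_of_Un_ordLess_infinite_Field[OF inf cr Suc] by simp
  qed
  have Umono: "m \<le> n \<Longrightarrow> U m \<subseteq> U n" for m n
    using lift_Suc_mono_le[of U] USuc by blast
  define UI where "UI = (\<Union>n. U n)"
  have UIV: "UI \<subseteq> V" using UV UI_def by blast
  have UIc: "|UI| <o r" using union_less_r[OF cr reg nr nat_less_r[OF nr]] Ucard UI_def by blast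
  obtain x where x: "x \<in> V" "x \<notin> UI" using exists_outside[OF rV UIc] by blast
  have Bbig: "\<not> UI \<subseteq> X" if "finite X" "card X < k" for X
  proof
    assume "UI \<subseteq> X"
    then have "U0 \<subseteq> X" using U0' UI_def by blast
    then have "card U0 \<le> card X" using that card_mono by blast
    then show False using U0 that by simp
  qed
  obtain Ps where Ps: "fan V E x UI Ps" "card Ps = k" using fan_k[OF kc x(1) x(2) UIV Bbig] by blast
  have F: "\<And>q. q \<in> Ps \<Longrightarrow> is_path V E q \<and> hd q = x \<and> last q \<in> UI \<and> set q \<inter> UI = {last q}"
    and D: "\<And>p q. p \<in> Ps \<Longrightarrow> q \<in> Ps \<Longrightarrow> p \<noteq> q \<Longrightarrow> set p \<inter> set q = {x}"
    and finP: "finite Ps"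
    using Ps(1) unfolding fan_def by blast+
  have linj: "inj_on last Ps" using fan_last_inj[OF Ps(1) x(2)] .
  define A where "A = last ` Ps"
  have cA: "card A = k" using linj Ps(2) A_def by (simp add: card_image)
  have finA: "finite A" using finP A_def by simp
  have AUI: "A \<subseteq> UI" using F A_def by auto
  obtain n where n: "A \<subseteq> U n" using fin_chain[OF finA AUI[unfolded UI_def] Umono] by blast
  define p where "p a = (THE q. q \<in> Ps \<and> last q = a)" for a
  have pA: "p a \<in> Ps \<and> last (p a) = a" if aA: "a \<in> A" for a
  proof -
    obtain q where q: "q \<in> Ps" "last q = a" using aA A_def by blast
    have "\<exists>!q. q \<in> Ps \<and> last q = a" using q linj by (auto simp: inj_on_def)
    then show ?thesis unfolding p_def by (rule theI')
  qed
  have fA1: "is_path V E (p a) \<and> hd (p a) = x \<and> last (p a) = a \<and> set (p a) \<inter> A = {a}" if a: "a \<in> A" for a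
  proof -
    have q: "is_path V E (p a) \<and> hd (p a) = x \<and> set (p a) \<inter> UI = {a}" using F[of "p a"] pA[OF a] by auto
    then show ?thesis using pA[OF a] AUI a by auto
  qed
  have fA2: "set (p a) \<inter> set (p b) = {x}" if a: "a \<in> A" and b: "b \<in> A" and ab: "a \<noteq> b" for a b
  proof -
    have "p a \<noteq> p b" using pA a b ab by metis
    then show "set (p a) \<inter> set (p b) = {x}" using D[of "p a" "p b"] pA[OF a] pA[OF b] by simp
  qed
  have fA1': "\<forall>a\<in>A. is_path V E (p a) \<and> hd (p a) = x \<and> last (p a) = a \<and> set (p a) \<inter> A = {a}"
    using fA1 by metis
  have fA2': "\<forall>a\<in>A. \<forall>b\<in>A. a \<noteq> b \<longrightarrow> set (p a) \<inter> set (p b) = {x}" using fA2 by metis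
  have xA: "x \<notin> A" using x(2) AUI by blast
  have fA: "fanA V E A x p"
    unfolding fanA_def using x(1) xA fA1' fA2' by (intro conjI)
  have "good r V E A"
  proof (rule ccontr)
    assume ng: "\<not> good r V E A"
    have "Wf A \<subseteq> U (Suc n)" unfolding USuc using n finA by blast
    then have WU: "Wf A \<subseteq> UI" unfolding UI_def by blast
    have "x \<notin> Wf A" using WU x by blast
    moreover have W3: "\<forall>a\<in>A. set (p a) \<inter> Wf A \<subseteq> {a}"
    proof
      fix a assume a: "a \<in> A"
      have "set (p a) \<inter> UI = {a}" using F[of "p a"] pA[OF a] by auto
      then show "set (p a) \<inter> Wf A \<subseteq> {a}" using WU by blast
    qed
    ultimately have "\<exists>x p. fanA V E A x p \<and> x \<notin> Wf A \<and> (\<forall>a\<in>A. set (p a) \<inter> Wf A \<subseteq> {a})"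
      using fA by blast
    then show False using Wf2[OF ng] by blast
  qed
  moreover have "A \<subseteq> V" using AUI UIV by blast
  ultimately show ?thesis using finA cA by blast
qed

end



lemma inner_set:
  assumes "distinct p" "p \<noteq> []"
  shows "inner p = set p - {hd p, last p}"
proof -
  obtain a t where p: "p = a # t" using assms(2) by (cases p) auto
  show ?thesis
  proof (cases "t = []")
    case True then show ?thesis using p by (simp add: inner_def)
  next
    case False
    have t: "t = butlast t @ [last t]" using False by simp
    have "distinct (butlast t @ [last t])" using assms(1) p t by (metis distinct.simps(2))
    then have d1: "last t \<notin> set (butlast t)" by simp
    have d2: "a \<notin> set t" using assms(1) p by simp
    have "set t = insert (last t) (set (butlast t))" using t by (metis Un_insert_right append_Nil2 list.simps(15) set_append)
    then show ?thesis using p False d1 d2 by (auto simp: inner_def)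
  qed
qed

lemma inner_rev: "inner (rev p) = inner p"
proof -
  have "tl (rev p) = rev (butlast p)" using butlast_rev[of "rev p"] by simp
  then have "butlast (tl (rev p)) = rev (tl (butlast p))" by simp
  then show ?thesis unfolding inner_def by (simp add: butlast_tl)
qed

definition fv :: "'a set \<Rightarrow> 'a \<times> ('a \<Rightarrow> 'a list) \<Rightarrow> 'a set" where
  "fv A d = insert (fst d) (\<Union>a\<in>A. set (snd d a)) - A"

context includes cardinal_syntax
begin

lemma good_family:
  assumes cr: "Card_order r" and reg: "regularCard r" and nr: "(natLeq, r) \<in> ordLess"
    and gd: "good r V E A" and finA: "finite A"
  shows "\<exists>M. M \<subseteq> {d. fanA V E A (fst d) (snd d)} \<and>
     (\<forall>d\<in>M. \<forall>d'\<in>M. d \<noteq> d' \<longrightarrow> fv A d \<inter> fv A d' = {}) \<and> r \<le>o |M|"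
proof -
  define Dset where "Dset = {d. fanA V E A (fst d) (snd d)}"
  define Fam where "Fam = {M. M \<subseteq> Dset \<and> (\<forall>d\<in>M. \<forall>d'\<in>M. d \<noteq> d' \<longrightarrow> fv A d \<inter> fv A d' = {})}"
  have "\<forall>C\<in>chains Fam. \<Union>C \<in> Fam"
  proof
    fix C assume C: "C \<in> chains Fam"
    then have CF: "C \<subseteq> Fam" and ch: "\<forall>X\<in>C. \<forall>Y\<in>C. X \<subseteq> Y \<or> Y \<subseteq> X"
      unfolding chains_def chain_subset_def by auto
    have "\<Union>C \<subseteq> Dset" using CF Fam_def by blast
    moreover have "\<forall>d\<in>\<Union>C. \<forall>d'\<in>\<Union>C. d \<noteq> d' \<longrightarrow> fv A d \<inter> fv A d' = {}"
    proof (intro ballI impI)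
      fix d d' assume d: "d \<in> \<Union>C" and d': "d' \<in> \<Union>C" and dd: "d \<noteq> d'"
      then obtain X Y where XY: "X \<in> C" "Y \<in> C" "d \<in> X" "d' \<in> Y" by blast
      then have "X \<subseteq> Y \<or> Y \<subseteq> X" using ch by blast
      then obtain Z where "Z \<in> C" "d \<in> Z" "d' \<in> Z" using XY by blast
      then show "fv A d \<inter> fv A d' = {}" using CF Fam_def dd by blast
    qed
    ultimately show "\<Union>C \<in> Fam" using Fam_def by blast
  qed
  then obtain M where MF: "M \<in> Fam" and Mmax: "\<forall>X\<in>Fam. M \<subseteq> X \<longrightarrow> X = M"
    using Zorn_Lemma by blast
  have MD: "M \<subseteq> Dset" and Mdisj: "\<forall>d\<in>M. \<forall>d'\<in>M. d \<noteq> d' \<longrightarrow> fv A d \<inter> fv A d' = {}"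
    using MF Fam_def by auto
  have "r \<le>o |M|"
  proof (rule ccontr)
    assume "\<not> r \<le>o |M|"
    then have Mr: "|M| <o r"
      using not_ordLeq_iff_ordLess[OF card_of_Well_order card_order_on_well_order_on[OF cr]] by blast
    define W where "W = (\<Union>d\<in>M. fv A d)"
    have fvfin: "finite (fv A d)" for d
      unfolding fv_def using finA by auto
    have Wr: "|W| <o r" unfolding W_def
      using union_less_r[OF cr reg nr Mr] finite_less_r[OF nr fvfin] by blast
    have fvV: "fv A d \<subseteq> V" if "d \<in> Dset" for d
    proof -
      have "fanA V E A (fst d) (snd d)" using that Dset_def by blast
      then have "fst d \<in> V" "\<forall>a\<in>A. set (snd d a) \<subseteq> V" unfolding fanA_def is_path_alt by auto
      then show ?thesis unfolding fv_def by blast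
    qed
    have WV: "W \<subseteq> V" using W_def fvV MD by blast
    obtain x p where xp: "fanA V E A x p" "x \<notin> W" "\<forall>a\<in>A. set (p a) \<inter> W \<subseteq> {a}"
      using gd WV Wr unfolding good_def by blast
    define d0 where "d0 = (x, p)"
    have d0D: "d0 \<in> Dset" using xp Dset_def d0_def by simp
    have d0W: "fv A d0 \<inter> W = {}"
    proof -
      have "v \<notin> W" if v: "v \<in> fv A d0" for v
      proof -
        from v have "v = x \<or> (\<exists>a\<in>A. v \<in> set (p a))" "v \<notin> A" unfolding fv_def d0_def by auto
        then show ?thesis using xp(2,3) by blast
      qed
      then show ?thesis by blast
    qed
    have xA: "x \<notin> A" using xp(1) unfolding fanA_def by blast
    have xfv: "x \<in> fv A d0" unfolding fv_def d0_def using xA by simp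
    have d0M: "d0 \<notin> M" using xfv xp(2) W_def by blast
    have "insert d0 M \<in> Fam"
      unfolding Fam_def
    proof (intro CollectI conjI ballI impI)
      show "insert d0 M \<subseteq> Dset" using MD d0D by blast
    next
      fix d d' assume d: "d \<in> insert d0 M" and d': "d' \<in> insert d0 M" and dd: "d \<noteq> d'"
      have "fv A d0 \<inter> fv A e = {}" if "e \<in> M" for e using d0W that W_def by blast
      then show "fv A d \<inter> fv A d' = {}" using d d' dd Mdisj by blast
    qed
    then have "insert d0 M = M" using Mmax by blast
    then show False using d0M by blast
  qed
  then show ?thesis using MD Mdisj Dset_def by blast
qed


lemma fanA_D1: "fanA V E A x p \<Longrightarrow> a \<in> A \<Longrightarrow> is_path V E (p a) \<and> hd (p a) = x \<and> last (p a) = a \<and> set (p a) \<inter> A = {a}"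
  unfolding fanA_def by metis

lemma fanA_D2: "fanA V E A x p \<Longrightarrow> a \<in> A \<Longrightarrow> b \<in> A \<Longrightarrow> a \<noteq> b \<Longrightarrow> set (p a) \<inter> set (p b) = {x}"
  unfolding fanA_def by metis

lemma fanA_D3: "fanA V E A x p \<Longrightarrow> x \<in> V \<and> x \<notin> A"
  unfolding fanA_def by metis

lemma good_sub:
  assumes sg: "sgraph V E" and cr: "Card_order r" and reg: "regularCard r" and nr: "(natLeq, r) \<in> ordLess"
    and AV: "A \<subseteq> V" and finA: "finite A" and cA: "card A = k" and gd: "good r V E A"
  shows "contains_subdivision V E (KB_verts k r) (KB_edges k r)"
proof -
  obtain M where MD: "M \<subseteq> {d. fanA V E A (fst d) (snd d)}"
    and Mdisj: "\<forall>d\<in>M. \<forall>d'\<in>M. d \<noteq> d' \<longrightarrow> fv A d \<inter> fv A d' = {}" and rM: "r \<le>o |M|"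
    using good_family[OF cr reg nr gd finA] by blast
  have "|Field r| \<le>o |M|" using ordIso_ordLeq_trans[OF card_of_Field_ordIso[OF cr] rM] .
  then obtain g where g: "inj_on g (Field r)" "g ` Field r \<subseteq> M" using card_of_ordLeq by metis
  obtain ai where ai: "bij_betw ai {..<k} A" using finite_same_card_bij[of "{..<k}" A] finA cA by auto
  define cx where "cx j = fst (g j)" for j
  define pp where "pp j = snd (g j)" for j
  have gfan: "fanA V E A (cx j) (pp j)" if "j \<in> Field r" for j
  proof -
    have "g j \<in> M" using g(2) that by blast
    then have "fanA V E A (fst (g j)) (snd (g j))" using MD by blast
    then show ?thesis unfolding cx_def pp_def .
  qed
  have gdisj: "fv A (g j) \<inter> fv A (g j') = {}" if "j \<in> Field r" "j' \<in> Field r" "j \<noteq> j'" for j j'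
  proof -
    have "g j \<noteq> g j'" using g(1) that by (meson inj_on_def)
    moreover have "g j \<in> M" "g j' \<in> M" using g(2) that by auto
    ultimately show ?thesis using Mdisj by blast
  qed
  have cxA: "cx j \<notin> A" if "j \<in> Field r" for j using fanA_D3[OF gfan[OF that]] by blast
  have cxfv: "cx j \<in> fv A (g j)" if "j \<in> Field r" for j
    using cxA[OF that] unfolding fv_def cx_def by simp
  define Q where "Q i j = pp j (ai i)" for i j
  have aiA: "ai i \<in> A" if "i < k" for i using ai that unfolding bij_betw_def by auto
  have Qp: "is_path V E (Q i j) \<and> hd (Q i j) = cx j \<and> last (Q i j) = ai i \<and> set (Q i j) \<inter> A = {ai i}"
    if "i < k" "j \<in> Field r" for i j
    using fanA_D1[OF gfan[OF that(2)] aiA[OF that(1)]] unfolding Q_def .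
  have Qinner: "inner (Q i j) = set (Q i j) - {cx j, ai i}" if "i < k" "j \<in> Field r" for i j
  proof -
    have "distinct (Q i j)" "Q i j \<noteq> []" using Qp[OF that] unfolding is_path_alt by auto
    then show ?thesis using inner_set Qp[OF that] by auto
  qed
  have innerA: "inner (Q i j) \<inter> A = {}" if "i < k" "j \<in> Field r" for i j
    using Qinner[OF that] Qp[OF that] by auto
  have innerfv: "inner (Q i j) \<subseteq> fv A (g j)" if "i < k" "j \<in> Field r" for i j
  proof -
    have "set (Q i j) \<subseteq> (\<Union>a\<in>A. set (snd (g j) a))" using aiA[OF that(1)] unfolding Q_def pp_def by blast
    then show ?thesis using innerA[OF that] Qinner[OF that] unfolding fv_def by blast
  qed
  define f where "f v = (case v of Inl i \<Rightarrow> ai i | Inr j \<Rightarrow> cx j)" for v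
  define P where "P u v = (case u of Inl i \<Rightarrow> (case v of Inr j \<Rightarrow> rev (Q i j) | Inl _ \<Rightarrow> [])
     | Inr j \<Rightarrow> (case v of Inl i \<Rightarrow> Q i j | Inr _ \<Rightarrow> []))" for u v
  have fimg: "f ` KB_verts k r = A \<union> cx ` Field r"
  proof -
    have "ai ` {..<k} = A" using ai unfolding bij_betw_def by blast
    then show ?thesis unfolding KB_verts_def Plus_def image_Un image_image f_def by simp
  qed
  have Qavoid: "inner (Q i j) \<inter> f ` KB_verts k r = {}" if "i < k" "j \<in> Field r" for i j
  proof -
    have "inner (Q i j) \<inter> cx ` Field r = {}"
    proof -
      have "cx j' \<notin> inner (Q i j)" if j': "j' \<in> Field r" for j'
      proof (cases "j' = j")
        case True then show ?thesis using Qinner[OF \<open>i < k\<close> \<open>j \<in> Field r\<close>] by simp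
      next
        case False
        then show ?thesis using cxfv[OF j'] innerfv[OF \<open>i < k\<close> \<open>j \<in> Field r\<close>]
            gdisj[OF \<open>j \<in> Field r\<close> j'] by blast
      qed
      then show ?thesis by blast
    qed
    then show ?thesis using fimg innerA[OF that] by blast
  qed
  have symE: "\<And>x y. E x y \<Longrightarrow> E y x" using sg unfolding sgraph_def by blast
  have edge: "\<exists>i j. i < k \<and> j \<in> Field r \<and> {u, v} = {Inl i, Inr j} \<and> inner (P u v) = inner (Q i j)
      \<and> is_path V E (P u v) \<and> hd (P u v) = f u \<and> last (P u v) = f v \<and> P v u = rev (P u v)"
    if uvE: "KB_edges k r u v" for u v
  proof -
    obtain i j where ij: "i < k" "j \<in> Field r" "(u = Inl i \<and> v = Inr j) \<or> (u = Inr j \<and> v = Inl i)"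
      using uvE unfolding KB_edges_def by blast
    note Q = Qp[OF ij(1,2)]
    from ij(3) show ?thesis
    proof
      assume uv: "u = Inl i \<and> v = Inr j"
      have "is_path V E (rev (Q i j))" using path_rev Q symE by blast
      moreover have "hd (rev (Q i j)) = ai i" "last (rev (Q i j)) = cx j"
        using Q unfolding is_path_alt by (auto simp: hd_rev last_rev)
      ultimately show ?thesis using uv ij(1,2) inner_rev[of "Q i j"]
        by (intro exI[of _ i] exI[of _ j]) (simp add: P_def f_def)
    next
      assume uv: "u = Inr j \<and> v = Inl i"
      then show ?thesis using Q ij(1,2)
        by (intro exI[of _ i] exI[of _ j]) (auto simp: P_def f_def)
    qed
  qed
  show ?thesis
    unfolding contains_subdivision_def
  proof (intro exI[of _ f] exI[of _ P] conjI allI impI)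
    show "inj_on f (KB_verts k r)"
    proof (rule inj_onI)
      fix u v assume u: "u \<in> KB_verts k r" and v: "v \<in> KB_verts k r" and fuv: "f u = f v"
      show "u = v"
      proof (cases u)
        case (Inl i)
        then have i: "i < k" using u unfolding KB_verts_def by auto
        show ?thesis
        proof (cases v)
          case (Inl i')
          then have "i' < k" using v unfolding KB_verts_def by auto
          then show ?thesis using Inl \<open>u = Inl i\<close> i fuv ai unfolding f_def bij_betw_def inj_on_def by auto
        next
          case (Inr j')
          then have "j' \<in> Field r" using v unfolding KB_verts_def by auto
          then show ?thesis using Inr \<open>u = Inl i\<close> fuv aiA[OF i] cxA unfolding f_def by auto
        qed
      next
        case (Inr j)
        then have j: "j \<in> Field r" using u unfolding KB_verts_def by auto
        show ?thesis
        proof (cases v)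
          case (Inl i')
          then have "i' < k" using v unfolding KB_verts_def by auto
          then show ?thesis using Inl \<open>u = Inr j\<close> fuv aiA cxA[OF j] unfolding f_def by auto
        next
          case (Inr j')
          then have j': "j' \<in> Field r" using v unfolding KB_verts_def by auto
          have "cx j = cx j'" using fuv Inr \<open>u = Inr j\<close> unfolding f_def by simp
          then have "j = j'" using cxfv[OF j] cxfv[OF j'] gdisj[OF j j'] by auto
          then show ?thesis using Inr \<open>u = Inr j\<close> by simp
        qed
      qed
    qed
    show "f ` KB_verts k r \<subseteq> V"
      using fimg AV fanA_D3[OF gfan] by auto
  next
    fix u v assume e: "KB_edges k r u v"
    then obtain i j where ij: "i < k" "j \<in> Field r" "inner (P u v) = inner (Q i j)"
      "is_path V E (P u v)" "hd (P u v) = f u" "last (P u v) = f v" "P v u = rev (P u v)"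
      using edge by blast
    show "is_path V E (P u v)" "hd (P u v) = f u" "last (P u v) = f v" "P v u = rev (P u v)"
      using ij by auto
    show "inner (P u v) \<inter> f ` KB_verts k r = {}" using ij Qavoid by simp
  next
    fix u v u' v' assume e: "KB_edges k r u v \<and> KB_edges k r u' v' \<and> {u, v} \<noteq> {u', v'}"
    obtain i j where ij: "i < k" "j \<in> Field r" "{u, v} = {Inl i, Inr j}" "inner (P u v) = inner (Q i j)"
      using edge e by blast
    obtain i' j' where ij': "i' < k" "j' \<in> Field r" "{u', v'} = {Inl i', Inr j'}" "inner (P u' v') = inner (Q i' j')"
      using edge e by blast
    have ne: "i \<noteq> i' \<or> j \<noteq> j'" using e ij(3) ij'(3) by auto
    show "inner (P u v) \<inter> inner (P u' v') = {}"
    proof (cases "j = j'")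
      case False
      then show ?thesis using innerfv[OF ij(1,2)] innerfv[OF ij'(1,2)] gdisj[OF ij(2) ij'(2)] ij(4) ij'(4) by blast
    next
      case True
      then have ii: "i \<noteq> i'" using ne by simp
      have "ai i \<noteq> ai i'" using ai ij(1) ij'(1) ii unfolding bij_betw_def inj_on_def by auto
      then have "set (Q i j) \<inter> set (Q i' j) = {cx j}"
        using fanA_D2[OF gfan[OF ij(2)] aiA[OF ij(1)] aiA[OF ij'(1)]] unfolding Q_def by simp
      then show ?thesis using Qinner[OF ij(1,2)] Qinner[OF ij'(1,2)] True ij(4) ij'(4) by auto
    qed
  qed
qed

end


theorem theorem2p1:
  fixes r :: "'k rel" and k :: nat and V :: "'a set" and E :: "'a \<Rightarrow> 'a \<Rightarrow> bool"
  assumes "Card_order r" and "regularCard r" and "(natLeq, r) \<in> ordLess"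
    and "sgraph V E" and "k_connected V E k"
    and "(r, card_of V) \<in> ordLeq"
  shows "contains_subdivision V E (KB_verts k r) (KB_edges k r)"
proof -
  have kc: "\<And>X. X \<subseteq> V \<Longrightarrow> finite X \<Longrightarrow> card X < k \<Longrightarrow> connected_on (V - X) E"
    using assms(5) unfolding k_connected_def by blast
  obtain A where A: "A \<subseteq> V" "finite A" "card A = k" "good r V E A"
    using exists_good[OF assms(1,2,3,6) kc] by blast
  show ?thesis using good_sub[OF assms(4,1,2,3) A] .
qed

end
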